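(* Let $M\ge 2$, $\epsilon>0$, and rates $R_1,\dots,R_M>0$ with order statistics $R_{(1)}\le\dots\le R_{(M)}$, so $R_{(M)}=\max\{R_1,\dots,R_M\}$; set $R_{key}=\sum_{i=1}^{M-1}R_{(i)}$. Let $W_1,\dots,W_M$ be independent with $W_i$ uniform on $\mathcal W_i=\{1,\dots,2^{nR_i}\}$, and $W^M=(W_1,\dots,W_M)$. Let $\mathcal C$ be a random codebook obtained by partitioning $\mathcal W^M=\mathcal W_1\times\dots\times\mathcal W_M$ uniformly at random into $2^{n(R_{key}-\epsilon)}$ bins, each containing $2^{n(R_{(M)}+\epsilon)}$ elements (independently of $W^M$), and let $K_A$ be the index of the bin containing $W^M$. Then for every $m\in\{1,\dots,M\}$ and all sufficiently large $n$, $$H(W^M\mid W_m,K_A,\mathcal C)\le n\big(R_{(M)}-R_m+\delta(\epsilon)\big),$$ where $\delta(\epsilon)\to0$ as $\epsilon\to0$.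
   Context: Conditioning on $\mathcal C$ means the entropy is averaged over the random choice of the binning codebook. Exponents such as $2^{nR_i}$ are treated as integers (rounding as needed). *)

theory Defs
  imports "HOL-Probability.Probability" "HOL-Library.FuncSet"
begin

definition cond_entropy :: "'a pmf \<Rightarrow> ('a \<Rightarrow> 'b) \<Rightarrow> ('a \<Rightarrow> 'c) \<Rightarrow> real" where
  "cond_entropy p X Y =
     measure_pmf.expectation p (\<lambda>\<omega>.
        - log 2 (measure_pmf.prob p {\<omega>'. X \<omega>' = X \<omega> \<and> Y \<omega>' = Y \<omega>}
                 / measure_pmf.prob p {\<omega>'. Y \<omega>' = Y \<omega>}))"

definition ord_stat :: "nat \<Rightarrow> (nat \<Rightarrow> real) \<Rightarrow> nat \<Rightarrow> real" where
  "ord_stat M R i = sort (map R [1..<M+1]) ! (i - 1)"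

definition R_key :: "nat \<Rightarrow> (nat \<Rightarrow> real) \<Rightarrow> real" where
  "R_key M R = (\<Sum>i=1..M-1. ord_stat M R i)"

definition alph_size :: "(nat \<Rightarrow> real) \<Rightarrow> nat \<Rightarrow> nat \<Rightarrow> nat" where
  "alph_size R n i = nat \<lceil>2 powr (real n * R i)\<rceil>"

definition msg_set :: "nat \<Rightarrow> (nat \<Rightarrow> real) \<Rightarrow> nat \<Rightarrow> (nat \<Rightarrow> nat) set" where
  "msg_set M R n = (\<Pi>\<^sub>E i\<in>{1..M}. {1..alph_size R n i})"

definition num_bins :: "nat \<Rightarrow> (nat \<Rightarrow> real) \<Rightarrow> real \<Rightarrow> nat \<Rightarrow> nat" where
  "num_bins M R \<epsilon> n = nat \<lceil>2 powr (real n * (R_key M R - \<epsilon>))\<rceil>"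

text \<open>Binning codebooks: assignments of every message tuple to one of the bins
  0, ..., B-1, all bins having (as nearly as possible) equal size |W^M| / B,
  i.e. 2^(n(R_(M)+eps)) up to rounding.\<close>
definition codebooks :: "nat \<Rightarrow> (nat \<Rightarrow> real) \<Rightarrow> real \<Rightarrow> nat \<Rightarrow> ((nat \<Rightarrow> nat) \<Rightarrow> nat) set" where
  "codebooks M R \<epsilon> n =
     (let W = msg_set M R n; B = num_bins M R \<epsilon> n
      in {f \<in> W \<rightarrow>\<^sub>E {..<B}. \<forall>k<B.
            card W div B \<le> card {w \<in> W. f w = k} \<and>
            card {w \<in> W. f w = k} \<le> card W div B + 1})"

text \<open>Joint distribution of (W^M, C): W^M uniform on W^M (i.e. independent uniform
  components), C a uniformly random codebook, independent of W^M.\<close>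
definition joint_dist :: "nat \<Rightarrow> (nat \<Rightarrow> real) \<Rightarrow> real \<Rightarrow> nat \<Rightarrow> ((nat \<Rightarrow> nat) \<times> ((nat \<Rightarrow> nat) \<Rightarrow> nat)) pmf" where
  "joint_dist M R \<epsilon> n = pair_pmf (pmf_of_set (msg_set M R n)) (pmf_of_set (codebooks M R \<epsilon> n))"

text \<open>H(W^M | W_m, K_A, C) where K_A = C(W^M) is the bin index of W^M.\<close>
definition binning_entropy :: "nat \<Rightarrow> (nat \<Rightarrow> real) \<Rightarrow> real \<Rightarrow> nat \<Rightarrow> nat \<Rightarrow> real" where
  "binning_entropy M R \<epsilon> n m =
     cond_entropy (joint_dist M R \<epsilon> n) (\<lambda>(w, C). w) (\<lambda>(w, C). (w m, C w, C))"

end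

theory Submission
  imports Defs
begin


definition bal :: "'a set \<Rightarrow> nat \<Rightarrow> ('a \<Rightarrow> nat) set" where
 "bal W B = {f \<in> W \<rightarrow>\<^sub>E {..<B}. \<forall>k<B. card W div B \<le> card {w\<in>W. f w = k} \<and> card {w\<in>W. f w = k} \<le> card W div B + 1}"

lemma bal_perm:
  assumes fin: "finite W" and pi: "bij_betw \<pi> W W" and a: "a \<in> W" and b: "b \<in> W"
  shows "card {C\<in>bal W B. C (\<pi> a) = C (\<pi> b)} = card {C\<in>bal W B. C a = C b}"
proof -
  define \<Phi> where "\<Phi> C = restrict (C \<circ> \<pi>) W" for C :: "'a \<Rightarrow> nat"
  have piW: "\<pi> x \<in> W" if "x \<in> W" for x using pi that by (auto simp: bij_betw_def)
  have cnt: "card {w\<in>W. C (\<pi> w) = k} = card {w\<in>W. C w = k}" for C k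
  proof -
    have "\<pi> ` {w\<in>W. C (\<pi> w) = k} = {w\<in>W. C w = k}"
    proof
      show "\<pi> ` {w\<in>W. C (\<pi> w) = k} \<subseteq> {w\<in>W. C w = k}" using piW by auto
    next
      show "{w\<in>W. C w = k} \<subseteq> \<pi> ` {w\<in>W. C (\<pi> w) = k}"
      proof
        fix x assume x: "x \<in> {w\<in>W. C w = k}"
        then obtain y where "y \<in> W" "x = \<pi> y" using pi unfolding bij_betw_def by (metis (no_types, lifting) imageE mem_Collect_eq)
        thus "x \<in> \<pi> ` {w\<in>W. C (\<pi> w) = k}" using x by auto
      qed
    qed
    moreover have "inj_on \<pi> {w\<in>W. C (\<pi> w) = k}"
      by (rule inj_on_subset[OF bij_betw_imp_inj_on[OF pi]]) auto
    ultimately show ?thesis using card_image by (metis (no_types, lifting))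
  qed
  have maps: "\<Phi> C \<in> bal W B" if "C \<in> bal W B" for C
  proof -
    have "{w\<in>W. \<Phi> C w = k} = {w\<in>W. C (\<pi> w) = k}" for k by (auto simp: \<Phi>_def)
    then show ?thesis using that piW unfolding bal_def by (auto simp: \<Phi>_def cnt PiE_iff)
  qed
  have inj: "inj_on \<Phi> (bal W B)"
  proof (rule inj_onI)
    fix C D assume C: "C \<in> bal W B" and D: "D \<in> bal W B" and e: "\<Phi> C = \<Phi> D"
    show "C = D"
    proof
      fix x
      show "C x = D x"
      proof (cases "x \<in> W")
        case True
        then obtain y where y: "y \<in> W" "x = \<pi> y" using pi by (auto simp: bij_betw_def)
        have "\<Phi> C y = \<Phi> D y" using e by simp
        thus ?thesis using y by (simp add: \<Phi>_def)
      next
        case False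
        thus ?thesis using C D by (auto simp: bal_def PiE_def extensional_def)
      qed
    qed
  qed
  have finB: "finite (bal W B)"
  proof -
    have "bal W B \<subseteq> W \<rightarrow>\<^sub>E {..<B}" by (auto simp: bal_def)
    thus ?thesis using finite_PiE[OF fin, of "\<lambda>_. {..<B}"] by (auto intro: finite_subset)
  qed
  have img: "\<Phi> ` bal W B = bal W B"
    using endo_inj_surj[OF finB _ inj] maps by auto
  have eqi: "\<Phi> ` {C\<in>bal W B. C (\<pi> a) = C (\<pi> b)} = {C\<in>bal W B. C a = C b}"
  proof
    show "\<Phi> ` {C\<in>bal W B. C (\<pi> a) = C (\<pi> b)} \<subseteq> {C\<in>bal W B. C a = C b}"
      using maps a b by (auto simp: \<Phi>_def)
  next
    show "{C\<in>bal W B. C a = C b} \<subseteq> \<Phi> ` {C\<in>bal W B. C (\<pi> a) = C (\<pi> b)}"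
    proof
      fix D assume D: "D \<in> {C\<in>bal W B. C a = C b}"
      then obtain C where C: "C \<in> bal W B" "D = \<Phi> C" using img by blast
      have "C (\<pi> a) = C (\<pi> b)" using D C a b by (simp add: \<Phi>_def)
      thus "D \<in> \<Phi> ` {C\<in>bal W B. C (\<pi> a) = C (\<pi> b)}" using C by auto
    qed
  qed
  have "inj_on \<Phi> {C\<in>bal W B. C (\<pi> a) = C (\<pi> b)}" using inj by (rule inj_on_subset) auto
  from card_image[OF this] show ?thesis unfolding eqi by simp
qed

definition sw :: "'a \<Rightarrow> 'a \<Rightarrow> 'a \<Rightarrow> 'a" where
  "sw a b x = (if x = a then b else if x = b then a else x)"

lemma sw_bij: assumes that: "a \<in> W" "b \<in> W" shows "bij_betw (sw a b) W W"
proof (rule bij_betw_imageI)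
  show "inj_on (sw a b) W" unfolding inj_on_def sw_def by auto
  show "sw a b ` W = W"
  proof
    show "sw a b ` W \<subseteq> W" using that by (auto simp: sw_def)
  next
    show "W \<subseteq> sw a b ` W"
    proof
      fix x assume "x \<in> W"
      hence "sw a b (sw a b x) = x" "sw a b x \<in> W" using that by (auto simp: sw_def)
      thus "x \<in> sw a b ` W" by (metis image_eqI)
    qed
  qed
qed

lemma bal_const:
  assumes fin: "finite W" and W: "a \<in> W" "b \<in> W" "c \<in> W" "d \<in> W" and ne: "a \<noteq> b" "c \<noteq> d"
  shows "card {C\<in>bal W B. C a = C b} = card {C\<in>bal W B. C c = C d}"
proof -
  define v where "v = sw a c b"
  have vW: "v \<in> W" using W by (auto simp: v_def sw_def)
  have cv: "c \<noteq> v" using ne by (auto simp: v_def sw_def)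
  define \<pi> where "\<pi> = sw v d \<circ> sw a c"
  have pi: "bij_betw \<pi> W W" unfolding \<pi>_def using bij_betw_trans[OF sw_bij[of a W c] sw_bij[of v W d]] W vW
    by simp
  have "\<pi> a = c" using cv ne by (simp add: \<pi>_def sw_def)
  moreover have "\<pi> b = d" by (simp add: \<pi>_def v_def sw_def)
  ultimately show ?thesis using bal_perm[OF fin pi W(1) W(2), of B] by simp
qed




lemma mod_count:
  assumes "B > 0" "k < B"
  shows "card {j\<in>{0..<N}. j mod B = k} = N div B + (if k < N mod B then 1 else 0)"
proof (induction N)
  case 0 then show ?case by simp
next
  case (Suc N)
  have e: "{j\<in>{0..<Suc N}. j mod B = k} = {j\<in>{0..<N}. j mod B = k} \<union> (if N mod B = k then {N} else {})"
    by (auto simp: less_Suc_eq)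
  have "card {j\<in>{0..<Suc N}. j mod B = k} = card {j\<in>{0..<N}. j mod B = k} + (if N mod B = k then 1 else 0)"
    unfolding e by (auto simp: card_insert_if)
  also have "\<dots> = Suc N div B + (if k < Suc N mod B then 1 else 0)"
    using Suc.IH assms mod_less_divisor[of B N]
    by (auto simp: div_Suc mod_Suc)
  finally show ?case .
qed

lemma bal_nonempty:
  assumes fin: "finite W" and B: "B > 0"
  shows "bal W B \<noteq> {}"
proof -
  obtain g where g: "bij_betw g W {0..<card W}" using ex_bij_betw_finite_nat[OF fin] by blast
  define f where "f = restrict (\<lambda>w. g w mod B) W"
  have cnt: "card {w\<in>W. f w = k} = card {j\<in>{0..<card W}. j mod B = k}" for k
  proof -
    have "g ` {w\<in>W. f w = k} = {j\<in>{0..<card W}. j mod B = k}"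
    proof
      show "g ` {w\<in>W. f w = k} \<subseteq> {j\<in>{0..<card W}. j mod B = k}"
        using g by (auto simp: f_def bij_betw_def)
    next
      show "{j\<in>{0..<card W}. j mod B = k} \<subseteq> g ` {w\<in>W. f w = k}"
      proof
        fix j assume j: "j \<in> {j\<in>{0..<card W}. j mod B = k}"
        then obtain w where "w \<in> W" "j = g w" using g unfolding bij_betw_def
          by (metis (no_types, lifting) imageE mem_Collect_eq)
        thus "j \<in> g ` {w\<in>W. f w = k}" using j by (auto simp: f_def)
      qed
    qed
    moreover have "inj_on g {w\<in>W. f w = k}"
      by (rule inj_on_subset[OF bij_betw_imp_inj_on[OF g]]) auto
    ultimately show ?thesis using card_image by (metis (no_types, lifting))
  qed
  have pe: "f \<in> W \<rightarrow>\<^sub>E {..<B}" using B by (auto simp: f_def)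
  have "\<forall>k<B. card W div B \<le> card {w\<in>W. f w = k} \<and> card {w\<in>W. f w = k} \<le> card W div B + 1"
  proof (intro allI impI)
    fix k assume k: "k < B"
    show "card W div B \<le> card {w\<in>W. f w = k} \<and> card {w\<in>W. f w = k} \<le> card W div B + 1"
      unfolding cnt mod_count[OF B k] by auto
  qed
  hence "f \<in> bal W B" using pe unfolding bal_def by blast
  thus ?thesis by auto
qed




lemma card_filter_sum: "finite A \<Longrightarrow> card {x\<in>A. P x} = (\<Sum>x\<in>A. if P x then 1 else 0 :: nat)"
  using sum.inter_filter[of A "\<lambda>_. 1::nat" P] by simp

lemma bal_finite: "finite W \<Longrightarrow> finite (bal W B)"
proof -
  assume fin: "finite W"
  have "bal W B \<subseteq> W \<rightarrow>\<^sub>E {..<B}" by (auto simp: bal_def)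
  thus ?thesis using finite_PiE[OF fin, of "\<lambda>_. {..<B}"] by (auto intro: finite_subset)
qed

lemma T0_bound:
  assumes fin: "finite W" and B: "B > 0" and a: "a \<in> W" and b: "b \<in> W" and ab: "a \<noteq> b"
  shows "real (card {C\<in>bal W B. C a = C b}) \<le> 2 * card (bal W B) / B"
proof -
  define CB where "CB = bal W B"
  define T0 where "T0 = card {C\<in>CB. C a = C b}"
  define q where "q = card W div B"
  have finCB: "finite CB" unfolding CB_def by (rule bal_finite[OF fin])
  have W2: "card W \<ge> 2"
  proof -
    have "{a,b} \<subseteq> W" using a b by auto
    from card_mono[OF fin this] show ?thesis using ab by simp
  qed
  have const: "card {C\<in>CB. C w = C w'} = T0" if "w \<in> W" "w' \<in> W" "w \<noteq> w'" for w w'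
    unfolding T0_def CB_def using bal_const[OF fin that(1,2) a b that(3) ab] by simp
  have "(\<Sum>w\<in>W. \<Sum>w'\<in>W-{w}. card {C\<in>CB. C w = C w'}) = (\<Sum>w\<in>W. \<Sum>w'\<in>W-{w}. T0)"
    by (intro sum.cong refl) (auto simp: const)
  also have "\<dots> = card W * (card W - 1) * T0" using fin by (simp add: card_Diff_singleton)
  finally have e1: "(\<Sum>w\<in>W. \<Sum>w'\<in>W-{w}. card {C\<in>CB. C w = C w'}) = card W * (card W - 1) * T0" .
  have "(\<Sum>w\<in>W. \<Sum>w'\<in>W-{w}. card {C\<in>CB. C w = C w'})
      = (\<Sum>w\<in>W. \<Sum>w'\<in>W-{w}. \<Sum>C\<in>CB. if C w = C w' then 1 else 0)"
    using finCB by (simp add: card_filter_sum)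
  also have "\<dots> = (\<Sum>C\<in>CB. \<Sum>w\<in>W. \<Sum>w'\<in>W-{w}. if C w = C w' then 1 else 0)"
    by (simp add: sum.swap[of _ CB] sum.swap[of _ CB "W - _"])
  also have "\<dots> = (\<Sum>C\<in>CB. \<Sum>w\<in>W. card {w'\<in>W-{w}. C w' = C w})"
  proof (intro sum.cong refl)
    fix C w
    have "card {w'\<in>W-{w}. C w' = C w} = (\<Sum>w'\<in>W-{w}. if C w' = C w then 1 else 0)"
      using fin by (intro card_filter_sum) simp
    thus "(\<Sum>w'\<in>W-{w}. if C w = C w' then 1 else 0) = card {w'\<in>W-{w}. C w' = C w}"
      by (simp add: eq_commute)
  qed
  also have "\<dots> \<le> (\<Sum>C\<in>CB. \<Sum>w\<in>W. q)"
  proof (intro sum_mono)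
    fix C w assume C: "C \<in> CB" and w: "w \<in> W"
    have lt: "C w < B" using C w by (auto simp: CB_def bal_def)
    hence "card {w'\<in>W. C w' = C w} \<le> q + 1" using C by (auto simp: CB_def bal_def q_def)
    moreover have "{w'\<in>W-{w}. C w' = C w} = {w'\<in>W. C w' = C w} - {w}" by auto
    moreover have "w \<in> {w'\<in>W. C w' = C w}" using w by simp
    ultimately show "card {w'\<in>W-{w}. C w' = C w} \<le> q" using fin by (simp add: card_Diff_singleton)
  qed
  also have "\<dots> = card CB * card W * q" by simp
  finally have "card W * (card W - 1) * T0 \<le> card CB * card W * q" using e1 by simp
  hence "card W * ((card W - 1) * T0) \<le> card W * (card CB * q)" by (simp add: ac_simps)
  hence n1: "(card W - 1) * T0 \<le> card CB * q" using W2 by simp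
  hence n1': "real ((card W - 1) * T0) \<le> real (card CB * q)" by (simp only: of_nat_le_iff)
  have cw: "real (card W - 1) = real (card W) - 1" using W2 by (simp add: of_nat_diff)
  have r1: "(real (card W) - 1) * real T0 \<le> real (card CB) * real q"
    using n1' unfolding of_nat_mult cw .
  have qB: "real q * B \<le> card W"
  proof -
    have "q * B \<le> card W" unfolding q_def by (simp add: div_times_less_eq_dividend)
    hence "real (q * B) \<le> real (card W)" by (simp only: of_nat_le_iff)
    thus ?thesis by simp
  qed
  have "real (card W) \<le> 2 * (real (card W) - 1)" using W2 by simp
  hence "real (card W) * real T0 \<le> 2 * (real (card W) - 1) * real T0" by (rule mult_right_mono) simp
  also have "\<dots> = 2 * ((real (card W) - 1) * real T0)" by simp
  also have "\<dots> \<le> 2 * (real (card CB) * real q)" using r1 by simp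
  finally have h1: "real (card W) * real T0 \<le> 2 * (real (card CB) * real q)" .
  have "real (card W) * real T0 * real B \<le> 2 * (real (card CB) * real q) * real B" using h1 by (rule mult_right_mono) simp
  also have "\<dots> = 2 * real (card CB) * (real q * real B)" by simp
  also have "\<dots> \<le> 2 * real (card CB) * real (card W)" using qB by (intro mult_left_mono) auto
  finally have "real (card W) * (real T0 * real B) \<le> real (card W) * (2 * real (card CB))" by (simp add: ac_simps)
  hence "real T0 * real B \<le> 2 * real (card CB)" using W2 by simp
  hence "real T0 \<le> 2 * card CB / B" using B by (simp add: le_divide_eq)
  thus ?thesis unfolding T0_def CB_def .
qed




lemma real_if10: "real (if P then 1 else 0) = (if P then 1 else 0)" by simp

lemma avg_bound:
  fixes key :: "'a \<Rightarrow> 'k"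
  assumes fin: "finite W" and W2: "card W \<ge> 2" and B: "B > 0"
    and F: "\<forall>w\<in>W. card {w'\<in>W. key w' = key w} \<le> F"
  shows "(\<Sum>x\<in>W \<times> bal W B. real (card {w'\<in>W. key w' = key (fst x) \<and> snd x w' = snd x (fst x)}))
     \<le> real (card W) * real (card (bal W B)) * (1 + 2 * F / B)"
proof -
  define CB where "CB = bal W B"
  have finCB: "finite CB" unfolding CB_def by (rule bal_finite[OF fin])
  define K where "K w = {w'\<in>W. key w' = key w}" for w
  have finK: "finite (K w)" for w using fin by (simp add: K_def)
  have pair: "\<exists>b\<in>W. b \<noteq> a" if "a \<in> W" for a
  proof (rule ccontr)
    assume "\<not> ?thesis"
    hence "W \<subseteq> {a}" by auto
    from card_mono[OF _ this] W2 show False by simp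
  qed
  have Tb: "real (card {C\<in>CB. C w' = C w}) \<le> 2 * card CB / B" if "w \<in> W" "w' \<in> W" "w' \<noteq> w" for w w'
    unfolding CB_def using T0_bound[OF fin B that(2,1,3)] .
  have "(\<Sum>x\<in>W \<times> CB. real (card {w'\<in>W. key w' = key (fst x) \<and> snd x w' = snd x (fst x)}))
      = (\<Sum>w\<in>W. \<Sum>C\<in>CB. real (card {w'\<in>K w. C w' = C w}))"
    by (simp add: sum.cartesian_product K_def conj_assoc split_beta)
  also have "\<dots> = (\<Sum>w\<in>W. \<Sum>C\<in>CB. \<Sum>w'\<in>K w. if C w' = C w then 1 else (0::real))"
    by (simp add: card_filter_sum[OF finK] real_if10)
  also have "\<dots> = (\<Sum>w\<in>W. \<Sum>w'\<in>K w. \<Sum>C\<in>CB. if C w' = C w then 1 else (0::real))"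
    by (simp add: sum.swap[of _ CB])
  also have "\<dots> = (\<Sum>w\<in>W. \<Sum>w'\<in>K w. real (card {C\<in>CB. C w' = C w}))"
    by (simp add: card_filter_sum[OF finCB] real_if10)
  also have "\<dots> \<le> (\<Sum>w\<in>W. card CB + F * (2 * card CB / B))"
  proof (rule sum_mono)
    fix w assume w: "w \<in> W"
    have wK: "w \<in> K w" using w by (simp add: K_def)
    have "(\<Sum>w'\<in>K w. real (card {C\<in>CB. C w' = C w}))
        = real (card {C\<in>CB. C w = C w}) + (\<Sum>w'\<in>K w - {w}. real (card {C\<in>CB. C w' = C w}))"
      by (rule sum.remove[OF finK wK])
    also have "\<dots> = card CB + (\<Sum>w'\<in>K w - {w}. real (card {C\<in>CB. C w' = C w}))" by simp
    also have "\<dots> \<le> card CB + (\<Sum>w'\<in>K w - {w}. 2 * card CB / B)"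
      by (intro add_mono sum_mono Tb) (auto simp: K_def w)
    also have "\<dots> = card CB + card (K w - {w}) * (2 * card CB / B)" by simp
    also have "\<dots> \<le> card CB + F * (2 * card CB / B)"
    proof -
      have "card (K w - {w}) \<le> F" using F w finK card_Diff_subset[of "{w}" "K w"]
        unfolding K_def by (meson card_mono Diff_subset finite_Diff le_trans)
      thus ?thesis by (intro add_left_mono mult_right_mono) auto
    qed
    finally show "(\<Sum>w'\<in>K w. real (card {C\<in>CB. C w' = C w})) \<le> card CB + F * (2 * card CB / B)" .
  qed
  also have "\<dots> = real (card W) * real (card CB) * (1 + 2 * F / B)"
    by (simp add: algebra_simps)
  finally show ?thesis unfolding CB_def by simp
qed




lemma ord_stat_max:
  assumes "M \<ge> 1" "m \<in> {1..M}"
  shows "R m \<le> ord_stat M R M"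
proof -
  define xs where "xs = sort (map R [1..<M+1])"
  have len: "length xs = M" by (simp add: xs_def)
  have "m \<in> set [1..<M+1]" using assms by auto
  hence "R m \<in> set xs" unfolding xs_def set_sort set_map by (rule imageI)
  then obtain j where j: "j < M" "xs ! j = R m" using len by (metis in_set_conv_nth)
  have "xs ! j \<le> xs ! (M - 1)" using j len by (intro sorted_nth_mono) (auto simp: xs_def)
  thus ?thesis using j by (simp add: ord_stat_def xs_def)
qed

lemma ord_stat_sum:
  assumes "M \<ge> 1"
  shows "R_key M R + ord_stat M R M = (\<Sum>i\<in>{1..M}. R i)"
proof -
  define xs where "xs = sort (map R [1..<M+1])"
  have len: "length xs = M" by (simp add: xs_def)
  have "R_key M R = (\<Sum>i=1..M-1. xs ! (i - 1))" by (simp add: R_key_def ord_stat_def xs_def)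
  also have "\<dots> = (\<Sum>j<M-1. xs ! j)"
    by (rule sum.reindex_bij_witness[where i="\<lambda>j. j + 1" and j="\<lambda>i. i - 1"]) auto
  finally have rk: "R_key M R = (\<Sum>j<M-1. xs ! j)" .
  have "R_key M R + ord_stat M R M = (\<Sum>j<M-1. xs ! j) + xs ! (M - 1)"
    by (simp add: rk ord_stat_def xs_def)
  also have "\<dots> = (\<Sum>j<M. xs ! j)" using assms
    by (metis Suc_diff_1 less_le_trans sum.lessThan_Suc zero_less_one)
  also have "\<dots> = sum_list xs" using len by (simp add: sum_list_sum_nth atLeast0LessThan)
  also have "\<dots> = sum_list (map R [1..<M+1])"
    unfolding xs_def by (metis mset_sort sum_mset_sum_list)
  also have "\<dots> = (\<Sum>i\<in>{1..M}. R i)"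
  proof -
    have "{1..<M+1} = {1..M}" by auto
    thus ?thesis by (simp only: interv_sum_list_conv_sum_set_nat set_upt)
  qed
  finally show ?thesis .
qed




lemma pair_pmf_of_set_eq:
  assumes "finite A" "A \<noteq> {}" "finite B" "B \<noteq> {}"
  shows "pair_pmf (pmf_of_set A) (pmf_of_set B) = pmf_of_set (A \<times> B)"
proof (rule pmf_eqI)
  fix x :: "'a \<times> 'b"
  obtain a b where x: "x = (a,b)" by (cases x)
  show "pmf (pair_pmf (pmf_of_set A) (pmf_of_set B)) x = pmf (pmf_of_set (A \<times> B)) x"
    using assms by (simp add: x pmf_pair card_cartesian_product indicator_def)
qed

lemma entropy_formula:
  fixes W :: "(nat \<Rightarrow> nat) set" and CB :: "((nat \<Rightarrow> nat) \<Rightarrow> nat) set"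
  assumes fin: "finite W" "W \<noteq> {}" "finite CB" "CB \<noteq> {}"
  shows "cond_entropy (pmf_of_set (W \<times> CB)) (\<lambda>(w, C). w) (\<lambda>(w, C). (w m, C w, C))
     = (\<Sum>x\<in>W \<times> CB. log 2 (card {w'\<in>W. w' m = fst x m \<and> snd x w' = snd x (fst x)})) / card (W \<times> CB)"
proof -
  have ne: "W \<times> CB \<noteq> {}" "finite (W \<times> CB)" using fin by auto
  have "cond_entropy (pmf_of_set (W \<times> CB)) (\<lambda>(w, C). w) (\<lambda>(w, C). (w m, C w, C))
     = (\<Sum>x\<in>W \<times> CB. - log 2 (measure_pmf.prob (pmf_of_set (W \<times> CB)) {\<omega>'. (case \<omega>' of (w, C) \<Rightarrow> w) = (case x of (w, C) \<Rightarrow> w) \<and> (case \<omega>' of (w, C) \<Rightarrow> (w m, C w, C)) = (case x of (w, C) \<Rightarrow> (w m, C w, C))} /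
                 measure_pmf.prob (pmf_of_set (W \<times> CB)) {\<omega>'. (case \<omega>' of (w, C) \<Rightarrow> (w m, C w, C)) = (case x of (w, C) \<Rightarrow> (w m, C w, C))})) / card (W \<times> CB)"
    unfolding cond_entropy_def using ne by (simp add: integral_pmf_of_set sum_negf)
  also have "\<dots> = (\<Sum>x\<in>W \<times> CB. log 2 (card {w'\<in>W. w' m = fst x m \<and> snd x w' = snd x (fst x)})) / card (W \<times> CB)"
  proof (rule arg_cong2[where f="(/)"], rule sum.cong, simp)
    fix x assume x: "x \<in> W \<times> CB"
    obtain w C where xe: "x = (w, C)" by (cases x)
    have s1: "(W \<times> CB) \<inter> {\<omega>'. (case \<omega>' of (w, C) \<Rightarrow> w) = (case x of (w, C) \<Rightarrow> w) \<and> (case \<omega>' of (w, C) \<Rightarrow> (w m, C w, C)) = (case x of (w, C) \<Rightarrow> (w m, C w, C))} = {x}"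
      using x by (auto simp: xe)
    have s2: "(W \<times> CB) \<inter> {\<omega>'. (case \<omega>' of (w, C) \<Rightarrow> (w m, C w, C)) = (case x of (w, C) \<Rightarrow> (w m, C w, C))}
        = (\<lambda>w'. (w', C)) ` {w'\<in>W. w' m = w m \<and> C w' = C w}"
      using x by (auto simp: xe)
    have c2: "card ((\<lambda>w'. (w', C)) ` {w'\<in>W. w' m = w m \<and> C w' = C w}) = card {w'\<in>W. w' m = w m \<and> C w' = C w}"
      by (rule card_image) (auto simp: inj_on_def)
    have pos: "card {w'\<in>W. w' m = w m \<and> C w' = C w} > 0"
      using x fin by (auto simp: xe card_gt_0_iff)
    have cpos: "card (W \<times> CB) > 0" using ne by (simp add: card_gt_0_iff)
    show "- log 2 (measure_pmf.prob (pmf_of_set (W \<times> CB)) {\<omega>'. (case \<omega>' of (w, C) \<Rightarrow> w) = (case x of (w, C) \<Rightarrow> w) \<and> (case \<omega>' of (w, C) \<Rightarrow> (w m, C w, C)) = (case x of (w, C) \<Rightarrow> (w m, C w, C))} /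
                 measure_pmf.prob (pmf_of_set (W \<times> CB)) {\<omega>'. (case \<omega>' of (w, C) \<Rightarrow> (w m, C w, C)) = (case x of (w, C) \<Rightarrow> (w m, C w, C))})
         = log 2 (card {w'\<in>W. w' m = fst x m \<and> snd x w' = snd x (fst x)})"
      using ne pos cpos
      apply (subst (1 2) measure_pmf_of_set[OF ne(1) ne(2)])
      apply (subst s1)
      apply (subst s2)
      apply (subst c2)
      apply (simp add: xe log_divide)
      done
  qed simp
  finally show ?thesis .
qed




lemma log_avg:
  fixes f :: "'a \<Rightarrow> real"
  assumes "finite S" "S \<noteq> {}" "\<forall>x\<in>S. f x > 0" "U > 0" "(\<Sum>x\<in>S. f x) / card S \<le> U"
  shows "(\<Sum>x\<in>S. log 2 (f x)) / card S \<le> log 2 U"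
proof -
  have cp: "real (card S) > 0" using assms by (simp add: card_gt_0_iff)
  have pt: "log 2 (f x) \<le> log 2 U + (f x / U - 1) / ln 2" if "x \<in> S" for x
  proof -
    have fx: "f x > 0" using assms that by auto
    have "ln (f x / U) \<le> f x / U - 1" using fx assms by (intro ln_le_minus_one) simp
    hence "ln (f x) - ln U \<le> f x / U - 1" using fx assms by (simp add: ln_div)
    hence "(ln (f x) - ln U) / ln 2 \<le> (f x / U - 1) / ln 2" by (simp add: divide_right_mono)
    thus ?thesis by (simp add: log_def diff_divide_distrib)
  qed
  have "(\<Sum>x\<in>S. log 2 (f x)) \<le> (\<Sum>x\<in>S. log 2 U + (f x / U - 1) / ln 2)"
    by (rule sum_mono) (use pt in auto)
  also have "\<dots> = card S * log 2 U + ((\<Sum>x\<in>S. f x) / U - card S) / ln 2"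
    by (simp add: sum.distrib sum_divide_distrib[symmetric] sum_subtractf)
  also have "\<dots> \<le> card S * log 2 U"
  proof -
    have "(\<Sum>x\<in>S. f x) \<le> U * card S" using assms(5) cp by (simp add: divide_le_eq mult.commute)
    hence "(\<Sum>x\<in>S. f x) / U - card S \<le> 0" using assms(4) by (simp add: divide_le_eq mult.commute)
    thus ?thesis by (simp add: divide_nonpos_pos)
  qed
  finally show ?thesis using cp by (simp add: divide_le_eq mult.commute)
qed




lemma main_bound:
  assumes M2: "M \<ge> 2" and Rpos: "\<forall>i\<in>{1..M}. R i > 0" and eps: "\<epsilon> > 0"
    and m: "m \<in> {1..M}" and n1: "n \<ge> 1"
  shows "binning_entropy M R \<epsilon> n m \<le> real M + 1 + real n * (ord_stat M R M - R m + \<epsilon>)"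
proof -
  define A where "A i = alph_size R n i" for i
  define W where "W = msg_set M R n"
  define B where "B = num_bins M R \<epsilon> n"
  define CB where "CB = codebooks M R \<epsilon> n"
  define I where "I = {1..M} - {m}"
  define F where "F = (\<Prod>i\<in>I. A i)"
  have Wdef: "W = (\<Pi>\<^sub>E i\<in>{1..M}. {1..A i})" by (simp add: W_def msg_set_def A_def)
  have finW: "finite W" unfolding Wdef by (intro finite_PiE) auto
  have CBdef: "CB = bal W B" by (simp add: CB_def codebooks_def bal_def Let_def W_def B_def)
  have Bge: "real B \<ge> 2 powr (real n * (R_key M R - \<epsilon>))"
    unfolding B_def num_bins_def by linarith
  have Bpos: "B > 0" unfolding B_def num_bins_def by simp
  have A2: "A i \<ge> 2" if "i \<in> {1..M}" for i
  proof -
    have "1 < 2 powr (real n * R i)" using Rpos that n1 by (intro gr_one_powr) auto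
    hence "\<lceil>2 powr (real n * R i)\<rceil> \<ge> 2" by linarith
    thus ?thesis unfolding A_def alph_size_def by linarith
  qed
  have Ale: "real (A i) \<le> 2 * 2 powr (real n * R i)" if "i \<in> {1..M}" for i
  proof -
    have "1 < 2 powr (real n * R i)" using Rpos that n1 by (intro gr_one_powr) auto
    moreover have "real (A i) = of_int \<lceil>2 powr (real n * R i)\<rceil>"
      unfolding A_def alph_size_def using calculation by simp
    ultimately show ?thesis by linarith
  qed
  define w1 where "w1 = (\<lambda>i\<in>{1..M}. 1::nat)"
  have w1W: "w1 \<in> W" using A2 unfolding Wdef w1_def by force
  have w2W: "w1(m := 2) \<in> W" using A2 m w1W unfolding Wdef w1_def by (auto simp: PiE_iff extensional_def)
  have "w1 \<noteq> w1(m := 2)" using m by (auto simp: w1_def fun_eq_iff)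
  hence W2: "card W \<ge> 2" using card_mono[OF finW, of "{w1, w1(m:=2)}"] w1W w2W by auto
  have Fb: "\<forall>w\<in>W. card {w'\<in>W. w' m = w m} \<le> F"
  proof
    fix w assume w: "w \<in> W"
    have "inj_on (\<lambda>w'. restrict w' I) {w'\<in>W. w' m = w m}"
    proof (rule inj_onI)
      fix x y assume x: "x \<in> {w'\<in>W. w' m = w m}" and y: "y \<in> {w'\<in>W. w' m = w m}"
        and e: "restrict x I = restrict y I"
      show "x = y"
      proof
        fix i
        show "x i = y i"
        proof (cases "i \<in> I")
          case True thus ?thesis using e by (metis restrict_apply')
        next
          case False
          thus ?thesis using x y unfolding Wdef I_def by (auto simp: PiE_def extensional_def)
        qed
      qed
    qed
    moreover have "(\<lambda>w'. restrict w' I) ` {w'\<in>W. w' m = w m} \<subseteq> (\<Pi>\<^sub>E i\<in>I. {1..A i})"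
    proof (rule image_subsetI)
      fix x assume "x \<in> {w'\<in>W. w' m = w m}"
      hence "\<forall>i\<in>{1..M}. x i \<in> {1..A i}" unfolding Wdef by (auto simp: PiE_iff)
      hence "\<forall>i\<in>I. x i \<in> {1..A i}" unfolding I_def by auto
      thus "restrict x I \<in> (\<Pi>\<^sub>E i\<in>I. {1..A i})" by (simp add: restrict_PiE_iff)
    qed
    moreover have "finite (\<Pi>\<^sub>E i\<in>I. {1..A i})" unfolding I_def by (intro finite_PiE) auto
    ultimately have "card {w'\<in>W. w' m = w m} \<le> card (\<Pi>\<^sub>E i\<in>I. {1..A i})"
      by (rule card_inj_on_le)
    also have "\<dots> = F" unfolding F_def I_def by (simp add: card_PiE)
    finally show "card {w'\<in>W. w' m = w m} \<le> F" .
  qed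
  have cardI: "card I = M - 1" using m by (simp add: I_def)
  have Fle: "real F \<le> 2 powr (real M - 1) * 2 powr (real n * (\<Sum>i\<in>I. R i))"
  proof -
    have "real F = (\<Prod>i\<in>I. real (A i))" by (simp add: F_def)
    also have "\<dots> \<le> (\<Prod>i\<in>I. 2 * 2 powr (real n * R i))"
      by (intro prod_mono) (auto simp: I_def Ale)
    also have "\<dots> = 2 ^ card I * (\<Prod>i\<in>I. 2 powr (real n * R i))"
      by (simp add: prod.distrib)
    also have "\<dots> = 2 powr (real M - 1) * 2 powr (real n * (\<Sum>i\<in>I. R i))"
    proof -
      have "(2::real) ^ card I = 2 powr (real M - 1)"
        using M2 cardI by (simp add: powr_realpow[symmetric] of_nat_diff)
      moreover have "2 powr (real n * (\<Sum>i\<in>I. R i)) = (\<Prod>i\<in>I. 2 powr (real n * R i))"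
        by (simp add: sum_distrib_left powr_sum)
      ultimately show ?thesis by simp
    qed
    finally show ?thesis .
  qed
  define E where "E = real n * (ord_stat M R M - R m + \<epsilon>)"
  have E0: "E \<ge> 0" unfolding E_def using ord_stat_max[of M m R] M2 m eps by simp
  have sumI: "(\<Sum>i\<in>I. R i) = R_key M R + ord_stat M R M - R m"
    using ord_stat_sum[of M R] M2 m by (simp add: I_def sum_diff1)
  have "2 * real F / real B \<le> 2 * (2 powr (real M - 1) * 2 powr (real n * (\<Sum>i\<in>I. R i))) / 2 powr (real n * (R_key M R - \<epsilon>))"
    using Fle Bge by (intro frac_le) auto
  also have "\<dots> = 2 powr (1 + (real M - 1) + real n * (\<Sum>i\<in>I. R i) - real n * (R_key M R - \<epsilon>))"
    by (simp only: powr_add powr_diff powr_one)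
  also have "\<dots> = 2 powr (real M + E)"
    unfolding sumI E_def by (simp add: algebra_simps)
  finally have FB: "2 * real F / real B \<le> 2 powr (real M + E)" .
  define U where "U = 1 + 2 * real F / real B"
  have Ule: "U \<le> 2 powr (real M + 1 + E)"
  proof -
    have "1 \<le> 2 powr (real M + E)" using E0 by (intro ge_one_powr_ge_zero) auto
    hence "U \<le> 2 * 2 powr (real M + E)" using FB by (simp add: U_def)
    thus ?thesis by (simp add: powr_add)
  qed
  have Upos: "U > 0"
  proof -
    have "2 * real F / real B \<ge> 0" by simp
    thus ?thesis unfolding U_def by linarith
  qed
  have neW: "W \<noteq> {}" using w1W by auto
  have finCB: "finite CB" unfolding CBdef by (rule bal_finite[OF finW])
  have neCB: "CB \<noteq> {}" unfolding CBdef by (rule bal_nonempty[OF finW Bpos])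
  have ent: "binning_entropy M R \<epsilon> n m
     = (\<Sum>x\<in>W \<times> CB. log 2 (card {w'\<in>W. w' m = fst x m \<and> snd x w' = snd x (fst x)})) / card (W \<times> CB)"
    unfolding binning_entropy_def joint_dist_def W_def[symmetric] CB_def[symmetric]
    using pair_pmf_of_set_eq[OF finW neW finCB neCB] entropy_formula[OF finW neW finCB neCB] by simp
  have avg: "(\<Sum>x\<in>W \<times> CB. real (card {w'\<in>W. w' m = fst x m \<and> snd x w' = snd x (fst x)})) / card (W \<times> CB) \<le> U"
  proof -
    have s: "(\<Sum>x\<in>W \<times> CB. real (card {w'\<in>W. w' m = fst x m \<and> snd x w' = snd x (fst x)}))
       \<le> real (card W) * real (card CB) * U"
      unfolding CBdef U_def using avg_bound[OF finW W2 Bpos, of "\<lambda>w. w m" F] Fb by simp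
    have cp: "real (card (W \<times> CB)) > 0" using finW finCB neW neCB by (simp add: card_gt_0_iff)
    show ?thesis using s cp by (simp add: divide_le_eq card_cartesian_product mult.commute)
  qed
  have pos: "\<forall>x\<in>W \<times> CB. real (card {w'\<in>W. w' m = fst x m \<and> snd x w' = snd x (fst x)}) > 0"
    using finW by (auto simp: card_gt_0_iff)
  have "binning_entropy M R \<epsilon> n m \<le> log 2 U"
    unfolding ent using log_avg[OF _ _ pos Upos avg] finW finCB neW neCB by simp
  also have "\<dots> \<le> log 2 (2 powr (real M + 1 + E))" using Ule Upos by (subst log_le_cancel_iff) auto
  also have "\<dots> = real M + 1 + E" by simp
  finally show ?thesis unfolding E_def .
qed


theorem lemma1:
  fixes M :: nat and R :: "nat \<Rightarrow> real"
  assumes "M \<ge> 2"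
    and "\<forall>i\<in>{1..M}. R i > 0"
  shows "\<exists>\<delta> :: real \<Rightarrow> real. (\<delta> \<longlongrightarrow> 0) (at_right 0) \<and>
           (\<forall>\<epsilon>>0. \<forall>m\<in>{1..M}. \<forall>\<^sub>F n in sequentially.
              binning_entropy M R \<epsilon> n m \<le> real n * (ord_stat M R M - R m + \<delta> \<epsilon>))"
proof (intro exI[of _ "\<lambda>e. 2 * e"] conjI allI impI ballI)
  have "((\<lambda>e::real. 2 * e) \<longlongrightarrow> 2 * 0) (at_right 0)" by (intro tendsto_intros)
  thus "((\<lambda>e::real. 2 * e) \<longlongrightarrow> 0) (at_right 0)" by simp
next
  fix \<epsilon> :: real and m assume eps: "\<epsilon> > 0" and m: "m \<in> {1..M}"
  define N where "N = nat \<lceil>(real M + 1) / \<epsilon>\<rceil> + 1"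
  show "\<forall>\<^sub>F n in sequentially. binning_entropy M R \<epsilon> n m \<le> real n * (ord_stat M R M - R m + 2 * \<epsilon>)"
    unfolding eventually_sequentially
  proof (intro exI[of _ N] allI impI)
    fix n assume n: "N \<le> n"
    have n1: "n \<ge> 1" using n by (simp add: N_def)
    have "real n \<ge> (real M + 1) / \<epsilon>" using n unfolding N_def by linarith
    hence ne: "real n * \<epsilon> \<ge> real M + 1" using eps by (simp add: divide_le_eq)
    have "binning_entropy M R \<epsilon> n m \<le> real M + 1 + real n * (ord_stat M R M - R m + \<epsilon>)"
      by (rule main_bound[OF assms eps m n1])
    also have "\<dots> \<le> real n * (ord_stat M R M - R m + 2 * \<epsilon>)"
      using ne by (simp add: algebra_simps)
    finally show "binning_entropy M R \<epsilon> n m \<le> real n * (ord_stat M R M - R m + 2 * \<epsilon>)" .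
  qed
qed

end
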